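(* Let $P$ be a Poisson tensor on $\mathbb{R}^3$, let $H\in C^\infty(\mathbb{R}^3)$, let $S\in C^\infty(\mathbb{R}^3)$ satisfy $PdS=0$, and let $g$ be the symmetric tensor with components $g^{ij}=H^iH^j-\delta^{ij}\sum_k H^kH^k$. Define the vector fields $\xi_P=PdH$ and $\xi=PdH+gdS$. Then at every regular point $x$ of $P$ (i.e. every $x$ with $P(x)\neq 0$), $\xi_P(x)=0$ if and only if $\xi(x)=0$.
   Context: $\mathbb{R}^3$ carries the standard Euclidean metric, used to identify tangent and cotangent spaces with $\mathbb{R}^3$; $H^i=H_i=\partial H/\partial x^i$ in standard coordinates. A Poisson tensor is a skew-symmetric bivector field satisfying the Jacobi identity; a point $x$ is regular for $P$ if the rank of $P$ at $x$ is maximal, which in $\mathbb{R}^3$ means $P(x)\neq 0$. *)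

theory Defs
  imports "HOL-Analysis.Analysis"
begin

definition partial :: "3 \<Rightarrow> (real^3 \<Rightarrow> real) \<Rightarrow> real^3 \<Rightarrow> real" where
  "partial i f x = frechet_derivative f (at x) (axis i 1)"

fun Ck :: "nat \<Rightarrow> (real^3 \<Rightarrow> real) \<Rightarrow> bool" where
  "Ck 0 f = continuous_on UNIV f"
| "Ck (Suc n) f = (f differentiable_on UNIV \<and> (\<forall>i. Ck n (partial i f)))"

definition smooth :: "(real^3 \<Rightarrow> real) \<Rightarrow> bool" where
  "smooth f \<longleftrightarrow> (\<forall>n. Ck n f)"

text \<open>Euclidean gradient (identification of dH with a vector via the standard metric).\<close>
definition grad :: "(real^3 \<Rightarrow> real) \<Rightarrow> real^3 \<Rightarrow> real^3" where
  "grad f x = (\<chi> i. partial i f x)"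

definition poisson_tensor :: "(real^3 \<Rightarrow> real^3^3) \<Rightarrow> bool" where
  "poisson_tensor P \<longleftrightarrow>
     (\<forall>i j. smooth (\<lambda>x. P x $ i $ j)) \<and>
     (\<forall>x i j. P x $ i $ j = - (P x $ j $ i)) \<and>
     (\<forall>x i j k. (\<Sum>l\<in>UNIV.
          P x $ i $ l * partial l (\<lambda>y. P y $ j $ k) x
        + P x $ j $ l * partial l (\<lambda>y. P y $ k $ i) x
        + P x $ k $ l * partial l (\<lambda>y. P y $ i $ j) x) = 0)"

definition gmet :: "(real^3 \<Rightarrow> real) \<Rightarrow> real^3 \<Rightarrow> real^3^3" where
  "gmet H x = (\<chi> i j. partial i H x * partial j H x
       - (if i = j then 1 else 0) * (\<Sum>k\<in>UNIV. partial k H x * partial k H x))"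

end

theory Submission
  imports Defs
begin

unbundle cross3_syntax

lemma key:
  fixes p s h :: "real^3"
  assumes p: "p \<noteq> 0" and ps: "p \<times> s = 0"
  shows "(p \<times> h = 0) \<longleftrightarrow> (p \<times> h + h \<times> (h \<times> s) = 0)"
proof -
  define l where "l = (p \<bullet> s) / (p \<bullet> p)"
  have pp: "p \<bullet> p \<noteq> 0" using p by simp
  have "p \<times> (p \<times> s) = (p \<bullet> s) *\<^sub>R p - (p \<bullet> p) *\<^sub>R s" by (rule Lagrange)
  hence "(p \<bullet> p) *\<^sub>R s = (p \<bullet> s) *\<^sub>R p" using ps by simp
  hence sl: "s = l *\<^sub>R p" using pp unfolding l_def
    by (metis (no_types, lifting) divide_inverse_commute scaleR_scaleR inverse_eq_divide
        right_inverse scaleR_one mult.commute)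
  define w where "w = p \<times> h"
  have hp: "h \<times> p = - w" unfolding w_def by (metis cross_skew)
  have eq: "h \<times> (h \<times> s) = - l *\<^sub>R (h \<times> w)"
    using sl hp by (simp add: cross_mult_right)
  show ?thesis
  proof
    assume "p \<times> h = 0" thus "p \<times> h + h \<times> (h \<times> s) = 0"
      using eq w_def by simp
  next
    assume a: "p \<times> h + h \<times> (h \<times> s) = 0"
    hence "w = l *\<^sub>R (h \<times> w)" using eq w_def by (simp add: algebra_simps)
    hence "w \<bullet> w = l * (w \<bullet> (h \<times> w))" by (metis inner_scaleR_right)
    also have "w \<bullet> (h \<times> w) = 0" by (simp add: dot_cross_self)
    finally have "w \<bullet> w = 0" by simp
    thus "p \<times> h = 0" unfolding w_def by simp
  qed
qed

theorem mainTheorem3: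
  fixes P :: "real^3 \<Rightarrow> real^3^3" and H S :: "real^3 \<Rightarrow> real" and x :: "real^3"
  assumes "poisson_tensor P"
    and "smooth H" and "smooth S"
    and "\<forall>y. P y *v grad S y = 0"
    and "P x \<noteq> 0"
  shows "(P x *v grad H x = 0) \<longleftrightarrow> (P x *v grad H x + gmet H x *v grad S x = 0)"
proof -
  have sk: "\<And>i j. P x $ i $ j = - (P x $ j $ i)" using assms(1) unfolding poisson_tensor_def by blast
  have d: "\<And>i. P x $ i $ i = 0" using sk by (metis add.inverse_unique add_eq_0_iff2 neg_equal_zero)
  define p :: "real^3" where "p = vector [- (P x $ 2 $ 3), P x $ 1 $ 3, - (P x $ 1 $ 2)]"
  have Pv: "\<And>v. P x *v v = p \<times> v"
    unfolding p_def
    by (simp add: vec_eq_iff forall_3 matrix_vector_mult_def sum_3 cross_components d sk[of 2 1]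
        sk[of 3 1] sk[of 3 2] algebra_simps)
  have pnz: "p \<noteq> 0"
  proof
    assume "p = 0"
    hence "P x $ 2 $ 3 = 0" "P x $ 1 $ 3 = 0" "P x $ 1 $ 2 = 0"
      unfolding p_def by (auto simp: vec_eq_iff forall_3)
    hence "P x = 0" using d sk[of 2 1] sk[of 3 1] sk[of 3 2]
      by (simp add: vec_eq_iff forall_3)
    thus False using assms(5) by simp
  qed
  have g: "\<And>v. gmet H x *v v = grad H x \<times> (grad H x \<times> v)"
    by (simp add: gmet_def grad_def vec_eq_iff forall_3 matrix_vector_mult_def sum_3
        cross_components algebra_simps)
  have ps: "p \<times> grad S x = 0" using assms(4) Pv by metis
  show ?thesis unfolding Pv g by (rule key[OF pnz ps])
qed

end
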